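(* Let $P,PA$ be labelings, $c$ a command and $\rho_1,\rho_2,\mu_1,\mu_2$ states. Assume $\mathtt b\notin\mathrm{UsedVars}(c)$, $\rho_1(\mathtt b)=\rho_2(\mathtt b)=0$, $|a|_{\mu_1}>0$ and $|a|_{\mu_2}>0$ for every array $a$, $P;PA\vdash_{ct}c$, $\rho_1\sim_P\rho_2$ and $\mu_1\sim_{PA}\mu_2$. Then $\langle\mathrm{SvSLH}_P(c),\rho_1,\mu_1,\mathtt{false}\rangle\approx_s\langle\mathrm{SvSLH}_P(c),\rho_2,\mu_2,\mathtt{false}\rangle$.
   Context: Language AWhile: scalar variables $X\in\mathcal V$, arrays $a\in\mathcal A$; $e::=n\mid X\mid\mathrm{op}_{\mathbb N}(e,\dots,e)\mid be\,?\,e_1:e_2$; $be::=\mathtt{true}\mid\mathtt{false}\mid\mathrm{cmp}(e,e)\mid\mathrm{op}_{\mathbb B}(be,\dots,be)$; $c::=\mathtt{skip}\mid X:=e\mid c_1;c_2\mid\mathtt{if}\ be\ \mathtt{then}\ c_1\ \mathtt{else}\ c_2\mid\mathtt{while}\ be\ \mathtt{do}\ c\mid X\leftarrow a[e]\mid a[e]\leftarrow e'$. Scalar state $\rho:\mathcal V\to\mathbb N$; array state $\mu$ with sizes $|a|_\mu$ and values $\mu(a)[i]$; $[\![\cdot]\!]_\rho$ pure evaluation. $\mathrm{UsedVars}(c)$: scalar variables occurring in $c$; $\mathtt b$ a reserved scalar variable. Speculative semantics: configurations $\langle c,\rho,\mu,\beta\rangle$; steps labelled by optional observation ($\mathrm{branch}(v),\mathrm{read}(a,i),\mathrm{write}(a,i)$)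 and optional directive ($\mathit{step},\mathit{force},\mathrm{load}(a',j),\mathrm{store}(a',j)$). $X:=e\to\mathtt{skip}$ updating $X$; $c_1;c_2\to c_1';c_2$ if $c_1\to c_1'$; $\mathtt{skip};c\to c$; $\mathtt{while}\ be\ \mathtt{do}\ c\to\mathtt{if}\ be\ \mathtt{then}\ (c;\mathtt{while}\ be\ \mathtt{do}\ c)\ \mathtt{else}\ \mathtt{skip}$ (no obs, no directive, flag kept). Conditional: $\mathit{step}$ goes to branch $v=[\![be]\!]_\rho$; $\mathit{force}$ goes to branch $\neg v$ and sets $\beta:=\mathtt{true}$; obs $\mathrm{branch}(v)$. $X\leftarrow a[ie]$: with $\mathit{step}$ needs $i=[\![ie]\!]_\rho<|a|_\mu$, $X:=\mu(a)[i]$; with $\mathrm{load}(a',j)$ needs $\beta=\mathtt{true}$, $i\ge|a|_\mu$, $j<|a'|_\mu$, $X:=\mu(a')[j]$; obs $\mathrm{read}(a,i)$. $a[ie]\leftarrow e$: with $\mathit{step}$ needs $i<|a|_\mu$, $\mu[a[i]\mapsto[\![e]\!]_\rho]$; with $\mathrm{store}(a',j)$ needs $\beta=\mathtt{true}$, $i\ge|a|_\mu$, $j<|a'|_\mu$, $\mu[a'[j]\mapsto[\![e]\!]_\rho]$; obs $\mathrm{write}(a,i)$. $\langle c_1,\rho_1,\mu_1,\beta_1\rangle\approx_s\langle c_2,\rho_2,\mu_2,\beta_2\rangle$ iff for all $D,O_1,O_2$, whenever both multi-step with the same directive list $D$ producing $O_1,O_2$, $O_1=O_2$. Labels: $\mathtt{true}$=public,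 $\mathtt{false}$=secret; $\ell_1\sqsubseteq\ell_2$ iff $\ell_2=\mathtt{true}\Rightarrow\ell_1=\mathtt{true}$. $P(e),P(be)$ public iff all variables occurring are public. $\rho_1\sim_P\rho_2$: agreement on public scalar variables; $\mu_1\sim_{PA}\mu_2$: agreement on sizes and contents of public arrays. CCT typing $P;PA\vdash_{ct}c$: $\mathtt{skip}$; $X:=e$ if $P(e)\sqsubseteq P(X)$; $c_1;c_2$ if both typed; $\mathtt{if}$ if $P(be)=\mathtt{true}$ and both branches typed; $\mathtt{while}$ if $P(be)=\mathtt{true}$ and body typed; $X\leftarrow a[i]$ if $P(i)=\mathtt{true}$ and $PA(a)\sqsubseteq P(X)$; $a[i]\leftarrow e$ if $P(i)=\mathtt{true}$ and $P(e)\sqsubseteq PA(a)$. Transformation $\mathrm{SvSLH}_P$: $\mathtt{skip}$, $X:=e$, $a[i]\leftarrow e$ unchanged; sequences translated componentwise; $\mathtt{if}\ be\ \mathtt{then}\ c_1\ \mathtt{else}\ c_2\mapsto\mathtt{if}\ be\ \mathtt{then}\ (\mathtt b:=be\,?\,\mathtt b:1;[\![c_1]\!])\ \mathtt{else}\ (\mathtt b:=be\,?\,1:\mathtt b;[\![c_2]\!])$; $\mathtt{while}\ be\ \mathtt{do}\ c\mapsto(\mathtt{while}\ be\ \mathtt{do}\ (\mathtt b:=be\,?\,\mathtt b:1;[\![c]\!]));\ \mathtt b:=be\,?\,1:\mathtt b$; $X\leftarrow a[i]\mapsto(X\leftarrow a[i];\ X:=(\mathtt b==1)\,?\,0:X)$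 if $P(X)=\mathtt{true}$, and unchanged otherwise. *)

theory Defs
  imports Main
begin

type_synonym vname = string
type_synonym aname = string
type_synonym val = nat

datatype aexp =
    ANum nat
  | AVar vname
  | AOp "nat list \<Rightarrow> nat" "aexp list"
  | ACond bexp aexp aexp
and bexp =
    BTrue
  | BFalse
  | BCmp "nat \<Rightarrow> nat \<Rightarrow> bool" aexp aexp
  | BOp "bool list \<Rightarrow> bool" "bexp list"

datatype com =
    Skip
  | Asgn vname aexp
  | Seq com com
  | If bexp com com
  | While bexp com
  | ARead vname aname aexp
  | AWrite aname aexp aexp

type_synonym sstate = "vname \<Rightarrow> val"
type_synonym astate = "aname \<Rightarrow> val list"

fun aeval :: "sstate \<Rightarrow> aexp \<Rightarrow> nat" and beval :: "sstate \<Rightarrow> bexp \<Rightarrow> bool" where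
  "aeval \<rho> (ANum n) = n"
| "aeval \<rho> (AVar x) = \<rho> x"
| "aeval \<rho> (AOp f es) = f (map (aeval \<rho>) es)"
| "aeval \<rho> (ACond be e1 e2) = (if beval \<rho> be then aeval \<rho> e1 else aeval \<rho> e2)"
| "beval \<rho> BTrue = True"
| "beval \<rho> BFalse = False"
| "beval \<rho> (BCmp f e1 e2) = f (aeval \<rho> e1) (aeval \<rho> e2)"
| "beval \<rho> (BOp f bs) = f (map (beval \<rho>) bs)"

fun avars :: "aexp \<Rightarrow> vname set" and bvars :: "bexp \<Rightarrow> vname set" where
  "avars (ANum n) = {}"
| "avars (AVar x) = {x}"
| "avars (AOp f es) = (\<Union>e\<in>set es. avars e)"
| "avars (ACond be e1 e2) = bvars be \<union> avars e1 \<union> avars e2"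
| "bvars BTrue = {}"
| "bvars BFalse = {}"
| "bvars (BCmp f e1 e2) = avars e1 \<union> avars e2"
| "bvars (BOp f bs) = (\<Union>b\<in>set bs. bvars b)"

fun used_vars :: "com \<Rightarrow> vname set" where
  "used_vars Skip = {}"
| "used_vars (Asgn x e) = {x} \<union> avars e"
| "used_vars (Seq c1 c2) = used_vars c1 \<union> used_vars c2"
| "used_vars (If be c1 c2) = bvars be \<union> used_vars c1 \<union> used_vars c2"
| "used_vars (While be c) = bvars be \<union> used_vars c"
| "used_vars (ARead x a i) = {x} \<union> avars i"
| "used_vars (AWrite a i e) = avars i \<union> avars e"

text \<open>The reserved misspeculation-flag variable \<open>b\<close>.\<close>
definition bflag :: vname where "bflag = ''b''"

datatype observation = OBranch bool | ORead aname nat | OWrite aname nat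
datatype direction = DStep | DForce | DLoad aname nat | DStore aname nat

text \<open>Single step; the direction and observation lists have length at most one
(empty list = no directive / no observation).\<close>
inductive spec_step ::
  "com \<Rightarrow> sstate \<Rightarrow> astate \<Rightarrow> bool \<Rightarrow> direction list \<Rightarrow> observation list \<Rightarrow>
   com \<Rightarrow> sstate \<Rightarrow> astate \<Rightarrow> bool \<Rightarrow> bool" where
  Spec_Asgn: "spec_step (Asgn x e) \<rho> \<mu> \<beta> [] [] Skip (\<rho>(x := aeval \<rho> e)) \<mu> \<beta>"
| Spec_Seq: "spec_step c1 \<rho> \<mu> \<beta> ds os c1' \<rho>' \<mu>' \<beta>' \<Longrightarrow>
             spec_step (Seq c1 c2) \<rho> \<mu> \<beta> ds os (Seq c1' c2) \<rho>' \<mu>' \<beta>'"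
| Spec_Seq_Skip: "spec_step (Seq Skip c) \<rho> \<mu> \<beta> [] [] c \<rho> \<mu> \<beta>"
| Spec_If: "v = beval \<rho> be \<Longrightarrow>
            spec_step (If be c1 c2) \<rho> \<mu> \<beta> [DStep] [OBranch v] (if v then c1 else c2) \<rho> \<mu> \<beta>"
| Spec_If_Force: "v = beval \<rho> be \<Longrightarrow>
            spec_step (If be c1 c2) \<rho> \<mu> \<beta> [DForce] [OBranch v] (if v then c2 else c1) \<rho> \<mu> True"
| Spec_While: "spec_step (While be c) \<rho> \<mu> \<beta> [] []
                 (If be (Seq c (While be c)) Skip) \<rho> \<mu> \<beta>"
| Spec_ARead: "i = aeval \<rho> ie \<Longrightarrow> i < length (\<mu> a) \<Longrightarrow>
            spec_step (ARead x a ie) \<rho> \<mu> \<beta> [DStep] [ORead a i] Skip (\<rho>(x := \<mu> a ! i)) \<mu> \<beta>"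
| Spec_ARead_Load: "i = aeval \<rho> ie \<Longrightarrow> \<beta> = True \<Longrightarrow> length (\<mu> a) \<le> i \<Longrightarrow> j < length (\<mu> a') \<Longrightarrow>
            spec_step (ARead x a ie) \<rho> \<mu> \<beta> [DLoad a' j] [ORead a i] Skip (\<rho>(x := \<mu> a' ! j)) \<mu> \<beta>"
| Spec_AWrite: "i = aeval \<rho> ie \<Longrightarrow> i < length (\<mu> a) \<Longrightarrow>
            spec_step (AWrite a ie e) \<rho> \<mu> \<beta> [DStep] [OWrite a i] Skip \<rho> (\<mu>(a := (\<mu> a)[i := aeval \<rho> e])) \<beta>"
| Spec_AWrite_Store: "i = aeval \<rho> ie \<Longrightarrow> \<beta> = True \<Longrightarrow> length (\<mu> a) \<le> i \<Longrightarrow> j < length (\<mu> a') \<Longrightarrow>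
            spec_step (AWrite a ie e) \<rho> \<mu> \<beta> [DStore a' j] [OWrite a i] Skip \<rho> (\<mu>(a' := (\<mu> a')[j := aeval \<rho> e])) \<beta>"

inductive spec_multi ::
  "com \<Rightarrow> sstate \<Rightarrow> astate \<Rightarrow> bool \<Rightarrow> direction list \<Rightarrow> observation list \<Rightarrow>
   com \<Rightarrow> sstate \<Rightarrow> astate \<Rightarrow> bool \<Rightarrow> bool" where
  Multi_Refl: "spec_multi c \<rho> \<mu> \<beta> [] [] c \<rho> \<mu> \<beta>"
| Multi_Step: "spec_step c \<rho> \<mu> \<beta> ds1 os1 c' \<rho>' \<mu>' \<beta>' \<Longrightarrow>
               spec_multi c' \<rho>' \<mu>' \<beta>' ds2 os2 c'' \<rho>'' \<mu>'' \<beta>'' \<Longrightarrow>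
               spec_multi c \<rho> \<mu> \<beta> (ds1 @ ds2) (os1 @ os2) c'' \<rho>'' \<mu>'' \<beta>''"

definition spec_equiv ::
  "com \<Rightarrow> sstate \<Rightarrow> astate \<Rightarrow> bool \<Rightarrow> com \<Rightarrow> sstate \<Rightarrow> astate \<Rightarrow> bool \<Rightarrow> bool" where
  "spec_equiv c1 \<rho>1 \<mu>1 \<beta>1 c2 \<rho>2 \<mu>2 \<beta>2 \<longleftrightarrow>
     (\<forall>ds os1 os2 c1' \<rho>1' \<mu>1' \<beta>1' c2' \<rho>2' \<mu>2' \<beta>2'.
        spec_multi c1 \<rho>1 \<mu>1 \<beta>1 ds os1 c1' \<rho>1' \<mu>1' \<beta>1' \<longrightarrow>
        spec_multi c2 \<rho>2 \<mu>2 \<beta>2 ds os2 c2' \<rho>2' \<mu>2' \<beta>2' \<longrightarrow> os1 = os2)"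

text \<open>Labels: True = public, False = secret.\<close>
type_synonym pub_vars = "vname \<Rightarrow> bool"
type_synonym pub_arrs = "aname \<Rightarrow> bool"

definition lab_le :: "bool \<Rightarrow> bool \<Rightarrow> bool" (infix "\<sqsubseteq>" 50) where
  "l1 \<sqsubseteq> l2 \<longleftrightarrow> (l2 = True \<longrightarrow> l1 = True)"

definition label_of_aexp :: "pub_vars \<Rightarrow> aexp \<Rightarrow> bool" where
  "label_of_aexp P e \<longleftrightarrow> (\<forall>x\<in>avars e. P x)"

definition label_of_bexp :: "pub_vars \<Rightarrow> bexp \<Rightarrow> bool" where
  "label_of_bexp P be \<longleftrightarrow> (\<forall>x\<in>bvars be. P x)"

definition pub_equiv :: "pub_vars \<Rightarrow> sstate \<Rightarrow> sstate \<Rightarrow> bool" where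
  "pub_equiv P \<rho>1 \<rho>2 \<longleftrightarrow> (\<forall>x. P x \<longrightarrow> \<rho>1 x = \<rho>2 x)"

definition pub_equiv_arr :: "pub_arrs \<Rightarrow> astate \<Rightarrow> astate \<Rightarrow> bool" where
  "pub_equiv_arr PA \<mu>1 \<mu>2 \<longleftrightarrow>
     (\<forall>a. PA a \<longrightarrow> length (\<mu>1 a) = length (\<mu>2 a) \<and> (\<forall>i < length (\<mu>1 a). \<mu>1 a ! i = \<mu>2 a ! i))"

inductive cct_typed :: "pub_vars \<Rightarrow> pub_arrs \<Rightarrow> com \<Rightarrow> bool" where
  CT_Skip: "cct_typed P PA Skip"
| CT_Asgn: "label_of_aexp P e \<sqsubseteq> P x \<Longrightarrow> cct_typed P PA (Asgn x e)"
| CT_Seq: "cct_typed P PA c1 \<Longrightarrow> cct_typed P PA c2 \<Longrightarrow> cct_typed P PA (Seq c1 c2)"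
| CT_If: "label_of_bexp P be = True \<Longrightarrow> cct_typed P PA c1 \<Longrightarrow> cct_typed P PA c2 \<Longrightarrow>
          cct_typed P PA (If be c1 c2)"
| CT_While: "label_of_bexp P be = True \<Longrightarrow> cct_typed P PA c \<Longrightarrow> cct_typed P PA (While be c)"
| CT_ARead: "label_of_aexp P i = True \<Longrightarrow> PA a \<sqsubseteq> P x \<Longrightarrow> cct_typed P PA (ARead x a i)"
| CT_AWrite: "label_of_aexp P i = True \<Longrightarrow> label_of_aexp P e \<sqsubseteq> PA a \<Longrightarrow>
              cct_typed P PA (AWrite a i e)"

fun svslh :: "pub_vars \<Rightarrow> com \<Rightarrow> com" where
  "svslh P Skip = Skip"
| "svslh P (Asgn x e) = Asgn x e"
| "svslh P (Seq c1 c2) = Seq (svslh P c1) (svslh P c2)"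
| "svslh P (If be c1 c2) =
     If be (Seq (Asgn bflag (ACond be (AVar bflag) (ANum 1))) (svslh P c1))
           (Seq (Asgn bflag (ACond be (ANum 1) (AVar bflag))) (svslh P c2))"
| "svslh P (While be c) =
     Seq (While be (Seq (Asgn bflag (ACond be (AVar bflag) (ANum 1))) (svslh P c)))
         (Asgn bflag (ACond be (ANum 1) (AVar bflag)))"
| "svslh P (ARead x a i) =
     (if P x then Seq (ARead x a i)
                      (Asgn x (ACond (BCmp (=) (AVar bflag) (ANum 1)) (ANum 0) (AVar x)))
      else ARead x a i)"
| "svslh P (AWrite a i e) = AWrite a i e"

end

theory Submission
  imports Defs
begin

lemma eval_agree:
  "(\<forall>x\<in>avars e. \<rho>1 x = \<rho>2 x) \<Longrightarrow> aeval \<rho>1 e = aeval \<rho>2 e"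
  "(\<forall>x\<in>bvars b. \<rho>1 x = \<rho>2 x) \<Longrightarrow> beval \<rho>1 b = beval \<rho>2 b"
proof (induction e and b rule: avars_bvars.induct)
  case (3 f es)
  then have "map (aeval \<rho>1) es = map (aeval \<rho>2) es" unfolding map_eq_conv by auto
  then show ?case by (metis aeval.simps(3))
next
  case (8 f bs)
  then have "map (beval \<rho>1) bs = map (beval \<rho>2) bs" unfolding map_eq_conv by auto
  then show ?case by (metis beval.simps(4))
qed auto

abbreviation g1 :: "bexp \<Rightarrow> com" where
  "g1 be \<equiv> Asgn bflag (ACond be (AVar bflag) (ANum 1))"
abbreviation g2 :: "bexp \<Rightarrow> com" where
  "g2 be \<equiv> Asgn bflag (ACond be (ANum 1) (AVar bflag))"
abbreviation mk :: "vname \<Rightarrow> aexp" where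
  "mk x \<equiv> ACond (BCmp (=) (AVar bflag) (ANum 1)) (ANum 0) (AVar x)"

inductive ok :: "pub_vars \<Rightarrow> pub_arrs \<Rightarrow> com \<Rightarrow> bool" for P PA where
  ok_Skip: "ok P PA Skip"
| ok_Asgn: "x \<noteq> bflag \<Longrightarrow> bflag \<notin> avars e \<Longrightarrow> label_of_aexp P e \<sqsubseteq> P x \<Longrightarrow> ok P PA (Asgn x e)"
| ok_G1: "label_of_bexp P be \<Longrightarrow> ok P PA (g1 be)"
| ok_G2: "label_of_bexp P be \<Longrightarrow> ok P PA (g2 be)"
| ok_Mask: "P x \<Longrightarrow> x \<noteq> bflag \<Longrightarrow> ok P PA (Asgn x (mk x))"
| ok_ReadS: "\<not> P x \<Longrightarrow> x \<noteq> bflag \<Longrightarrow> label_of_aexp P i \<Longrightarrow> ok P PA (ARead x a i)"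
| ok_ReadP: "P x \<Longrightarrow> PA a \<Longrightarrow> x \<noteq> bflag \<Longrightarrow> label_of_aexp P i \<Longrightarrow>
     ok P PA (Seq (ARead x a i) (Asgn x (mk x)))"
| ok_Write: "label_of_aexp P i \<Longrightarrow> label_of_aexp P e \<sqsubseteq> PA a \<Longrightarrow> ok P PA (AWrite a i e)"
| ok_Seq: "ok P PA c1 \<Longrightarrow> ok P PA c2 \<Longrightarrow> ok P PA (Seq c1 c2)"
| ok_If: "label_of_bexp P be \<Longrightarrow> ok P PA t1 \<Longrightarrow> ok P PA t2 \<Longrightarrow>
     ok P PA (If be (Seq (g1 be) t1) (Seq (g2 be) t2))"
| ok_W1: "label_of_bexp P be \<Longrightarrow> ok P PA t \<Longrightarrow> ok P PA (Seq (While be (Seq (g1 be) t)) (g2 be))"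
| ok_W2: "label_of_bexp P be \<Longrightarrow> ok P PA t \<Longrightarrow>
     ok P PA (Seq (If be (Seq (Seq (g1 be) t) (While be (Seq (g1 be) t))) Skip) (g2 be))"
| ok_W3: "label_of_bexp P be \<Longrightarrow> ok P PA t \<Longrightarrow> ok P PA B \<Longrightarrow>
     ok P PA (Seq (Seq B (While be (Seq (g1 be) t))) (g2 be))"

fun pmask :: "com \<Rightarrow> vname option" where
  "pmask (Seq c1 c2) = (if c1 = Skip then pmask c2 else pmask c1)"
| "pmask (Asgn x e) = (if e = mk x then Some x else None)"
| "pmask _ = None"

fun pend :: "sstate \<Rightarrow> com \<Rightarrow> bool" where
  "pend \<rho> (Seq c1 c2) = (if c1 = Skip then pend \<rho> c2 else pend \<rho> c1)"
| "pend \<rho> (Asgn x e) = (x = bflag \<and> aeval \<rho> e = 1)"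
| "pend \<rho> _ = False"

definition Rst :: "pub_vars \<Rightarrow> pub_arrs \<Rightarrow> com \<Rightarrow> sstate \<Rightarrow> astate \<Rightarrow> sstate \<Rightarrow> astate \<Rightarrow> bool \<Rightarrow> bool" where
  "Rst P PA c \<rho>1 \<mu>1 \<rho>2 \<mu>2 \<beta> \<longleftrightarrow>
     \<rho>1 bflag = \<rho>2 bflag \<and>
     (\<forall>y. P y \<longrightarrow> \<rho>1 y = \<rho>2 y \<or> (pmask c = Some y \<and> \<rho>1 bflag = 1)) \<and>
     (\<forall>a. PA a \<longrightarrow> length (\<mu>1 a) = length (\<mu>2 a)) \<and>
     (\<not> \<beta> \<longrightarrow> (\<forall>a. PA a \<longrightarrow> \<mu>1 a = \<mu>2 a)) \<and>
     (\<beta> \<longrightarrow> \<rho>1 bflag = 1 \<or> pend \<rho>1 c)"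

lemma Rst_Seq: "Rst P PA c1 \<rho>1 \<mu>1 \<rho>2 \<mu>2 \<beta> \<Longrightarrow> Rst P PA (Seq c1 c2) \<rho>1 \<mu>1 \<rho>2 \<mu>2 \<beta>"
  by (cases "c1 = Skip") (auto simp: Rst_def)

lemma Rst_Seq_iff: "c1 \<noteq> Skip \<Longrightarrow> Rst P PA (Seq c1 c2) \<rho>1 \<mu>1 \<rho>2 \<mu>2 \<beta> = Rst P PA c1 \<rho>1 \<mu>1 \<rho>2 \<mu>2 \<beta>"
  by (auto simp: Rst_def)

lemma Rst_Seq_Skip: "Rst P PA (Seq Skip c2) \<rho>1 \<mu>1 \<rho>2 \<mu>2 \<beta> = Rst P PA c2 \<rho>1 \<mu>1 \<rho>2 \<mu>2 \<beta>"
  by (auto simp: Rst_def)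

lemma Rst_pub: "Rst P PA c \<rho>1 \<mu>1 \<rho>2 \<mu>2 \<beta> \<Longrightarrow> pmask c = None \<Longrightarrow> P y \<Longrightarrow> \<rho>1 y = \<rho>2 y"
  by (auto simp: Rst_def)

lemma lab_a: "label_of_aexp P e \<Longrightarrow> (\<forall>y. P y \<longrightarrow> \<rho>1 y = \<rho>2 y) \<Longrightarrow> aeval \<rho>1 e = aeval \<rho>2 e"
  by (rule eval_agree) (auto simp: label_of_aexp_def)

lemma lab_b: "label_of_bexp P e \<Longrightarrow> (\<forall>y. P y \<longrightarrow> \<rho>1 y = \<rho>2 y) \<Longrightarrow> beval \<rho>1 e = beval \<rho>2 e"
  by (rule eval_agree) (auto simp: label_of_bexp_def)

inductive_cases stSkip: "spec_step Skip \<rho> \<mu> \<beta> ds os c' \<rho>' \<mu>' \<beta>'"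
inductive_cases stAsgn: "spec_step (Asgn x e) \<rho> \<mu> \<beta> ds os c' \<rho>' \<mu>' \<beta>'"
inductive_cases stSeq: "spec_step (Seq c1 c2) \<rho> \<mu> \<beta> ds os c' \<rho>' \<mu>' \<beta>'"
inductive_cases stIf: "spec_step (If b c1 c2) \<rho> \<mu> \<beta> ds os c' \<rho>' \<mu>' \<beta>'"
inductive_cases stWhile: "spec_step (While b c) \<rho> \<mu> \<beta> ds os c' \<rho>' \<mu>' \<beta>'"
inductive_cases stRead: "spec_step (ARead x a i) \<rho> \<mu> \<beta> ds os c' \<rho>' \<mu>' \<beta>'"
inductive_cases stWrite: "spec_step (AWrite a i e) \<rho> \<mu> \<beta> ds os c' \<rho>' \<mu>' \<beta>'"

lemma main:
  "ok P PA c \<Longrightarrow> spec_step c \<rho>1 \<mu>1 \<beta> ds os1 d1 \<rho>1' \<mu>1' \<beta>1 \<Longrightarrow>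
   spec_step c \<rho>2 \<mu>2 \<beta> ds os2 d2 \<rho>2' \<mu>2' \<beta>2 \<Longrightarrow> Rst P PA c \<rho>1 \<mu>1 \<rho>2 \<mu>2 \<beta> \<Longrightarrow>
   os1 = os2 \<and> d1 = d2 \<and> \<beta>1 = \<beta>2 \<and> ok P PA d1 \<and> Rst P PA d1 \<rho>1' \<mu>1' \<rho>2' \<mu>2' \<beta>1"
proof (induction c arbitrary: \<rho>1 \<mu>1 \<beta> ds os1 d1 \<rho>1' \<mu>1' \<beta>1 \<rho>2 \<mu>2 os2 d2 \<rho>2' \<mu>2' \<beta>2 rule: ok.induct)
  case ok_Skip
  then show ?case by (auto elim: stSkip)
next
  case (ok_Asgn x e)
  have pm: "pmask (Asgn x e) = None" using ok_Asgn.hyps(2) by auto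
  have pub: "\<forall>y. P y \<longrightarrow> \<rho>1 y = \<rho>2 y" using ok_Asgn.prems(3) pm by (auto simp: Rst_def)
  have ev: "P x \<Longrightarrow> aeval \<rho>1 e = aeval \<rho>2 e" using ok_Asgn.hyps(3) pub by (auto simp: lab_le_def intro: lab_a)
  from ok_Asgn.prems(1,2) show ?case using ok_Asgn.prems(3) ok_Asgn.hyps(1) pub ev
    by (auto elim!: stAsgn simp: Rst_def intro: ok.intros split: if_splits)
next
  case (ok_G1 be)
  have pm: "pmask (Asgn bflag (ACond be (AVar bflag) (ANum 1))) = None" by auto
  have pub: "\<forall>y. P y \<longrightarrow> \<rho>1 y = \<rho>2 y" using ok_G1.prems(3) pm by (auto simp: Rst_def)
  have ev: "beval \<rho>1 be = beval \<rho>2 be" using ok_G1.hyps(1) pub by (rule lab_b)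
  from ok_G1.prems(1,2) show ?case using ok_G1.prems(3) pub ev
    by (auto elim!: stAsgn simp: Rst_def intro: ok.intros split: if_splits)
next
  case (ok_G2 be)
  have pm: "pmask (Asgn bflag (ACond be (ANum 1) (AVar bflag))) = None" by auto
  have pub: "\<forall>y. P y \<longrightarrow> \<rho>1 y = \<rho>2 y" using ok_G2.prems(3) pm by (auto simp: Rst_def)
  have ev: "beval \<rho>1 be = beval \<rho>2 be" using ok_G2.hyps(1) pub by (rule lab_b)
  from ok_G2.prems(1,2) show ?case using ok_G2.prems(3) pub ev
    by (auto elim!: stAsgn simp: Rst_def intro: ok.intros split: if_splits)
next
  case (ok_Mask x)
  from ok_Mask.prems(1,2) show ?case using ok_Mask.prems(3) ok_Mask.hyps
    by (auto elim!: stAsgn simp: Rst_def intro: ok.intros split: if_splits)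
next
  case (ok_ReadS x i a)
  have pm: "pmask (ARead x a i) = None" by auto
  have pub: "\<forall>y. P y \<longrightarrow> \<rho>1 y = \<rho>2 y" using ok_ReadS.prems(3) pm by (auto simp: Rst_def)
  have ev: "aeval \<rho>1 i = aeval \<rho>2 i" using ok_ReadS.hyps(3) pub by (rule lab_a)
  from ok_ReadS.prems(1,2) show ?case using ok_ReadS.prems(3) ok_ReadS.hyps pub ev
    by (auto elim!: stRead simp: Rst_def intro: ok.intros split: if_splits)
next
  case (ok_ReadP x a i)
  have pm: "pmask (ARead x a i) = None" by auto
  have pub: "\<forall>y. P y \<longrightarrow> \<rho>1 y = \<rho>2 y" using ok_ReadP.prems(3) pm by (auto simp: Rst_def)
  have ev: "aeval \<rho>1 i = aeval \<rho>2 i" using ok_ReadP.hyps(4) pub by (rule lab_a)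
  have okn: "ok P PA (Seq Skip (Asgn x (mk x)))" using ok_ReadP.hyps by (intro ok.intros)
  have A: "os1 = os2 \<and> d1 = d2 \<and> \<beta>1 = \<beta>2 \<and> d1 = Seq Skip (Asgn x (mk x)) \<and> \<beta>1 = \<beta>"
    using ok_ReadP.prems(1,2) ev by (auto elim!: stRead stSeq)
  have B: "Rst P PA (Seq Skip (Asgn x (mk x))) \<rho>1' \<mu>1' \<rho>2' \<mu>2' \<beta>"
    using ok_ReadP.prems ok_ReadP.hyps pub ev
    by (auto elim!: stRead stSeq simp: Rst_def split: if_splits)
  from A have e: "d2 = d1" "\<beta>2 = \<beta>1" "d1 = Seq Skip (Asgn x (mk x))" "\<beta>1 = \<beta>" "os1 = os2" by auto
  show ?case unfolding e using B okn by simp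
next
  case (ok_Write i e a)
  have pm: "pmask (AWrite a i e) = None" by auto
  have pub: "\<forall>y. P y \<longrightarrow> \<rho>1 y = \<rho>2 y" using ok_Write.prems(3) pm by (auto simp: Rst_def)
  have ev: "aeval \<rho>1 i = aeval \<rho>2 i" using ok_Write.hyps(1) pub by (rule lab_a)
  have ev2: "PA a \<Longrightarrow> aeval \<rho>1 e = aeval \<rho>2 e" using ok_Write.hyps(2) pub by (auto simp: lab_le_def intro: lab_a)
  from ok_Write.prems(1,2) show ?case using ok_Write.prems(3) ok_Write.hyps pub ev ev2
    by (auto elim!: stWrite simp: Rst_def intro: ok.intros split: if_splits)
next
  case (ok_Seq ca cb)
  show ?case
  proof (cases "ca = Skip")
    case True
    have s1: "d1 = cb \<and> \<rho>1' = \<rho>1 \<and> \<mu>1' = \<mu>1 \<and> \<beta>1 = \<beta> \<and> os1 = []"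
      using ok_Seq.prems(1) True by (auto elim: stSeq stSkip)
    have s2: "d2 = cb \<and> \<rho>2' = \<rho>2 \<and> \<mu>2' = \<mu>2 \<and> \<beta>2 = \<beta> \<and> os2 = []"
      using ok_Seq.prems(2) True by (auto elim: stSeq stSkip)
    have "Rst P PA cb \<rho>1 \<mu>1 \<rho>2 \<mu>2 \<beta>" using ok_Seq.prems(3) True Rst_Seq_Skip by metis
    then show ?thesis using s1 s2 ok_Seq.hyps by auto
  next
    case False
    from ok_Seq.prems(1) False obtain ca' where a1: "spec_step ca \<rho>1 \<mu>1 \<beta> ds os1 ca' \<rho>1' \<mu>1' \<beta>1" "d1 = Seq ca' cb"
      by (auto elim: stSeq)
    from ok_Seq.prems(2) False obtain ca'' where a2: "spec_step ca \<rho>2 \<mu>2 \<beta> ds os2 ca'' \<rho>2' \<mu>2' \<beta>2" "d2 = Seq ca'' cb"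
      by (auto elim: stSeq)
    have "Rst P PA ca \<rho>1 \<mu>1 \<rho>2 \<mu>2 \<beta>" using ok_Seq.prems(3) False Rst_Seq_iff by metis
    from ok_Seq.IH(1)[OF a1(1) a2(1) this] have "os1 = os2 \<and> ca' = ca'' \<and> \<beta>1 = \<beta>2 \<and> ok P PA ca' \<and> Rst P PA ca' \<rho>1' \<mu>1' \<rho>2' \<mu>2' \<beta>1" .
    then show ?thesis using a1(2) a2(2) ok_Seq.hyps by (auto intro: ok.intros Rst_Seq)
  qed
next
  case (ok_If be t1 t2)
  have pm: "pmask (If be (Seq (g1 be) t1) (Seq (g2 be) t2)) = None" by auto
  have pub: "\<forall>y. P y \<longrightarrow> \<rho>1 y = \<rho>2 y" using ok_If.prems(3) pm by (auto simp: Rst_def)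
  have ev: "beval \<rho>1 be = beval \<rho>2 be" using ok_If.hyps(1) pub by (rule lab_b)
  have o1: "ok P PA (Seq (g1 be) t1)" "ok P PA (Seq (g2 be) t2)"
    by (rule ok_Seq[OF ok_G1[OF ok_If.hyps(1)] ok_If.hyps(2)], rule ok_Seq[OF ok_G2[OF ok_If.hyps(1)] ok_If.hyps(3)])
  from ok_If.prems(1,2) show ?case using ok_If.prems(3) o1 pub ev
    by (auto elim!: stIf simp: Rst_def split: if_splits)
next
  case (ok_W1 be t)
  have o: "ok P PA (Seq (If be (Seq (Seq (g1 be) t) (While be (Seq (g1 be) t))) Skip) (g2 be))"
    using ok_W1.hyps by (rule ok.intros)
  from ok_W1.prems(1,2) show ?case using ok_W1.prems(3) o
    by (auto elim!: stSeq stWhile simp: Rst_def)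
next
  case (ok_W2 be t)
  have pm: "pmask (If be (Seq (Seq (g1 be) t) (While be (Seq (g1 be) t))) Skip) = None" by auto
  have pub: "\<forall>y. P y \<longrightarrow> \<rho>1 y = \<rho>2 y" using ok_W2.prems(3) pm by (auto simp: Rst_def)
  have ev: "beval \<rho>1 be = beval \<rho>2 be" using ok_W2.hyps(1) pub by (rule lab_b)
  have o: "ok P PA (Seq (Seq (Seq (g1 be) t) (While be (Seq (g1 be) t))) (g2 be))"
          "ok P PA (Seq Skip (g2 be))"
    by (rule ok_W3[OF ok_W2.hyps(1,2) ok_Seq[OF ok_G1[OF ok_W2.hyps(1)] ok_W2.hyps(2)]],
        rule ok_Seq[OF ok_Skip ok_G2[OF ok_W2.hyps(1)]])
  from ok_W2.prems(1,2) show ?case using ok_W2.prems(3) o pub ev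
    by (auto elim!: stSeq stIf simp: Rst_def split: if_splits)
next
  case (ok_W3 be t B)
  let ?W = "While be (Seq (g1 be) t)"
  show ?case
  proof (cases "B = Skip")
    case True
    have o: "ok P PA (Seq ?W (g2 be))" using ok_W3.hyps by (intro ok.intros)
    from ok_W3.prems(1,2) show ?thesis using ok_W3.prems(3) o True
      by (auto elim!: stSeq stSkip simp: Rst_def)
  next
    case False
    from ok_W3.prems(1) False obtain B' where a1: "spec_step B \<rho>1 \<mu>1 \<beta> ds os1 B' \<rho>1' \<mu>1' \<beta>1" "d1 = Seq (Seq B' ?W) (g2 be)"
      by (elim stSeq) auto
    from ok_W3.prems(2) False obtain B'' where a2: "spec_step B \<rho>2 \<mu>2 \<beta> ds os2 B'' \<rho>2' \<mu>2' \<beta>2" "d2 = Seq (Seq B'' ?W) (g2 be)"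
      by (elim stSeq) auto
    have "Rst P PA B \<rho>1 \<mu>1 \<rho>2 \<mu>2 \<beta>" using ok_W3.prems(3) False Rst_Seq_iff
      by (metis com.distinct(3))
    from ok_W3.IH(2)[OF a1(1) a2(1) this] have "os1 = os2 \<and> B' = B'' \<and> \<beta>1 = \<beta>2 \<and> ok P PA B' \<and> Rst P PA B' \<rho>1' \<mu>1' \<rho>2' \<mu>2' \<beta>1" .
    then have h: "os1 = os2" "B'' = B'" "\<beta>2 = \<beta>1" "ok P PA B'" "Rst P PA B' \<rho>1' \<mu>1' \<rho>2' \<mu>2' \<beta>1" by auto
    show ?thesis unfolding a1(2) a2(2) h(2,3) using h(1) ok.ok_W3[OF ok_W3.hyps(1,2) h(4)] Rst_Seq[OF Rst_Seq[OF h(5)]] by simp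
  qed
qed


lemma ok_svslh: "cct_typed P PA c \<Longrightarrow> bflag \<notin> used_vars c \<Longrightarrow> ok P PA (svslh P c)"
proof (induction rule: cct_typed.induct)
  case (CT_Skip)
  then show ?case by (simp add: ok.ok_Skip)
next
  case (CT_Asgn P e x PA)
  then show ?case by (auto intro: ok.ok_Asgn)
next
  case (CT_Seq P PA c1 c2)
  then show ?case by (auto intro: ok.ok_Seq)
next
  case (CT_If P be PA c1 c2)
  then have "ok P PA (svslh P c1)" "ok P PA (svslh P c2)" "label_of_bexp P be" by auto
  from ok.ok_If[OF this(3,1,2)] show ?case by simp
next
  case (CT_While P be PA c)
  then have "ok P PA (svslh P c)" "label_of_bexp P be" by auto
  from ok.ok_W1[OF this(2,1)] show ?case by simp
next
  case (CT_ARead P i PA a x)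
  show ?case
  proof (cases "P x")
    case True
    then have "PA a" using CT_ARead.hyps(2) by (simp add: lab_le_def)
    moreover have "x \<noteq> bflag" "label_of_aexp P i" using CT_ARead by auto
    ultimately have "ok P PA (Seq (ARead x a i) (Asgn x (mk x)))" using True by (intro ok.ok_ReadP)
    then show ?thesis using True by simp
  next
    case False
    then show ?thesis using CT_ARead by (auto intro: ok.ok_ReadS)
  qed
next
  case (CT_AWrite P i e PA a)
  then show ?case by (auto intro: ok.ok_Write)
qed

fun nd :: "com \<Rightarrow> bool" where
  "nd (Seq c1 c2) = (if c1 = Skip then True else nd c1)"
| "nd (If b c1 c2) = False"
| "nd (ARead x a i) = False"
| "nd (AWrite a i e) = False"
| "nd _ = True"

lemma len_step: "spec_step c \<rho> \<mu> \<beta> ds os c' \<rho>' \<mu>' \<beta>' \<Longrightarrow>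
  length os = length ds \<and> length ds = (if nd c then 0 else 1)"
  by (induction rule: spec_step.induct) (auto elim: stSkip)

lemma len_multi: "spec_multi c \<rho> \<mu> \<beta> ds os c' \<rho>' \<mu>' \<beta>' \<Longrightarrow> length os = length ds"
  by (induction rule: spec_multi.induct) (auto dest: len_step)

lemma multi:
  "spec_multi c \<rho>1 \<mu>1 \<beta> ds os1 d1 \<rho>1' \<mu>1' \<beta>1 \<Longrightarrow>
   spec_multi c \<rho>2 \<mu>2 \<beta> ds os2 d2 \<rho>2' \<mu>2' \<beta>2 \<Longrightarrow> ok P PA c \<Longrightarrow> Rst P PA c \<rho>1 \<mu>1 \<rho>2 \<mu>2 \<beta> \<Longrightarrow>
   os1 = os2"
proof (induction arbitrary: \<rho>2 \<mu>2 os2 d2 \<rho>2' \<mu>2' \<beta>2 rule: spec_multi.induct)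
  case (Multi_Refl c \<rho> \<mu> \<beta>)
  then show ?case using len_multi by fastforce
next
  case (Multi_Step c \<rho> \<mu> \<beta> ds1 os1 c' \<rho>' \<mu>' \<beta>' ds2 osB c'' \<rho>'' \<mu>'' \<beta>'')
  from Multi_Step.prems(1) show ?case
  proof (cases rule: spec_multi.cases)
    case Multi_Refl
    then have "ds1 = []" "ds2 = []" by auto
    then show ?thesis using Multi_Refl len_step[OF Multi_Step.hyps(1)] len_multi[OF Multi_Step.hyps(2)] by auto
  next
    case (Multi_Step ds1' os1' c2' \<rho>2'' \<mu>2'' \<beta>2'' ds2' os2')
    have "length ds1 = length ds1'" using len_step[OF Multi_Step.hyps(1)] len_step[OF Multi_Step(3)] by simp
    with Multi_Step(1) have dd: "ds1 = ds1'" "ds2 = ds2'" by auto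
    from main[OF Multi_Step.prems(2) Multi_Step.hyps(1) Multi_Step(3)[folded dd] Multi_Step.prems(3)]
    have h: "os1 = os1'" "c' = c2'" "\<beta>' = \<beta>2''" "ok P PA c'" "Rst P PA c' \<rho>' \<mu>' \<rho>2'' \<mu>2'' \<beta>'" by auto
    have "osB = os2'"
      using Multi_Step.IH[OF _ h(4,5)] Multi_Step(4)[folded dd h(2,3)] by blast
    then show ?thesis using h(1) Multi_Step(2) by simp
  qed
qed

theorem theorem6p2:
  fixes P :: pub_vars and PA :: pub_arrs and c :: com
    and \<rho>1 \<rho>2 :: sstate and \<mu>1 \<mu>2 :: astate
  assumes "bflag \<notin> used_vars c"
    and "\<rho>1 bflag = 0" and "\<rho>2 bflag = 0"
    and "\<forall>a. 0 < length (\<mu>1 a)" and "\<forall>a. 0 < length (\<mu>2 a)"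
    and "cct_typed P PA c"
    and "pub_equiv P \<rho>1 \<rho>2"
    and "pub_equiv_arr PA \<mu>1 \<mu>2"
  shows "spec_equiv (svslh P c) \<rho>1 \<mu>1 False (svslh P c) \<rho>2 \<mu>2 False"
proof -
  have ok: "ok P PA (svslh P c)" using ok_svslh assms(6,1) .
  have arr: "\<forall>a. PA a \<longrightarrow> \<mu>1 a = \<mu>2 a"
    using assms(8) unfolding pub_equiv_arr_def by (auto intro: nth_equalityI)
  have R: "Rst P PA (svslh P c) \<rho>1 \<mu>1 \<rho>2 \<mu>2 False"
    using assms(2,3,7) arr unfolding Rst_def pub_equiv_def by auto
  show ?thesis unfolding spec_equiv_def using multi ok R by blast
qed

end
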